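(* Let $\mathbb{X}$ be a restriction category. Then $\mathbb{X}$ admits a restriction terminal object if and only if $\mathbf{L}[\mathbb{X}]$ admits a local terminal object. Moreover, $\mathbb{X}$ admits restriction products (of every pair of objects) if and only if $\mathbf{L}[\mathbb{X}]$ admits local products (of every pair of objects).
   Context: Composition is diagrammatic. A restriction category is a category with an assignment to each $f:A\to B$ of $\bar f:A\to A$ such that $\bar ff=f$; $\bar f\bar g=\bar g\bar f$ and $\bar g\bar f=\overline{\bar gf}$ for $f:A\to B$, $g:A\to C$; $f\bar g=\overline{fg}f$ for $f:A\to B$, $g:B\to C$. $f$ is total if $\bar f=\mathrm{id}$. A restriction terminal object is an object $*$ such that each object $A$ has a unique total morphism $!_A:A\to *$ and $f!_B=\bar f!_A$ for every $f:A\to B$. A restriction product of $A$ and $B$ is an object $A\times B$ with total morphisms $\pi_A:A\times B\to A$, $\pi_B:A\times B\to B$ such that for all $f:C\to A$, $g:C\to B$ there is a unique $\langle f,g\rangle:C\to A\times B$ with $\langle f,g\rangle\pi_A=\bar gf$ and $\langle f,g\rangle\pi_B=\bar fg$. $\mathbf{L}[\mathbb{X}]$: objects $(A,a)$ with $a=\bar a:A\to A$; morphisms $f:(A,a)\to(B,b)$ are $f:A\to B$ with $\bar f=a$, $fb=f$; identity $a$; composition as in $\mathbb{X}$; it is a local category with $\mathsf{L}(A,a)=(A,\mathrm{id}_A)$ and $\eta_{(A,a)}=a$. In a local category (a category with objects $\mathsf{L}M$ and morphisms $\eta_M:M\to\mathsf{L}M$ satisfying the local category axioms), an object $M$ is total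 if $M=\mathsf{L}M$ and $\eta_M=\mathrm{id}_M$. A local terminal object is a total object which is terminal. A local product of $M$ and $N$ is a product $M\times N$ (with projections) in the category such that the product $\mathsf{L}M\times\mathsf{L}N$ exists, $\mathsf{L}M\times\mathsf{L}N=\mathsf{L}(M\times N)$, and $\eta_{M\times N}=\eta_M\times\eta_N$. *)

theory Defs
  imports Main
begin

record ('o, 'm) cat =
  Obj :: "'o set"
  Arr :: "'m set"
  dom :: "'m \<Rightarrow> 'o"
  cod :: "'m \<Rightarrow> 'o"
  idm :: "'o \<Rightarrow> 'm"
  cmp :: "'m \<Rightarrow> 'm \<Rightarrow> 'm"   (* cmp f g = f ; g  (first f, then g) *)

definition hom :: "('o, 'm, 'x) cat_scheme \<Rightarrow> 'o \<Rightarrow> 'o \<Rightarrow> 'm set" where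
  "hom C A B = {f \<in> Arr C. dom C f = A \<and> cod C f = B}"

definition category :: "('o, 'm, 'x) cat_scheme \<Rightarrow> bool" where
  "category C \<longleftrightarrow>
     (\<forall>f \<in> Arr C. dom C f \<in> Obj C \<and> cod C f \<in> Obj C) \<and>
     (\<forall>A \<in> Obj C. idm C A \<in> hom C A A) \<and>
     (\<forall>f \<in> Arr C. \<forall>g \<in> Arr C. cod C f = dom C g \<longrightarrow>
         cmp C f g \<in> hom C (dom C f) (cod C g)) \<and>
     (\<forall>f \<in> Arr C. \<forall>g \<in> Arr C. \<forall>h \<in> Arr C. cod C f = dom C g \<longrightarrow> cod C g = dom C h \<longrightarrow>
         cmp C (cmp C f g) h = cmp C f (cmp C g h)) \<and>
     (\<forall>f \<in> Arr C. cmp C (idm C (dom C f)) f = f \<and> cmp C f (idm C (cod C f)) = f)"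

record ('o, 'm) rcat = "('o, 'm) cat" +
  rst :: "'m \<Rightarrow> 'm"

definition restriction_category :: "('o, 'm) rcat \<Rightarrow> bool" where
  "restriction_category X \<longleftrightarrow> category X \<and>
     (\<forall>f \<in> Arr X. rst X f \<in> hom X (dom X f) (dom X f)) \<and>
     (\<forall>f \<in> Arr X. cmp X (rst X f) f = f) \<and>
     (\<forall>f \<in> Arr X. \<forall>g \<in> Arr X. dom X f = dom X g \<longrightarrow>
         cmp X (rst X f) (rst X g) = cmp X (rst X g) (rst X f) \<and>
         cmp X (rst X g) (rst X f) = rst X (cmp X (rst X g) f)) \<and>
     (\<forall>f \<in> Arr X. \<forall>g \<in> Arr X. cod X f = dom X g \<longrightarrow>
         cmp X f (rst X g) = cmp X (rst X (cmp X f g)) f)"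

definition total :: "('o, 'm) rcat \<Rightarrow> 'm \<Rightarrow> bool" where
  "total X f \<longleftrightarrow> rst X f = idm X (dom X f)"

definition restriction_terminal :: "('o, 'm) rcat \<Rightarrow> 'o \<Rightarrow> bool" where
  "restriction_terminal X T \<longleftrightarrow> T \<in> Obj X \<and>
     (\<forall>A \<in> Obj X. \<exists>!t. t \<in> hom X A T \<and> total X t) \<and>
     (\<forall>A \<in> Obj X. \<forall>B \<in> Obj X. \<forall>f \<in> hom X A B. \<forall>tA tB.
        tA \<in> hom X A T \<and> total X tA \<longrightarrow> tB \<in> hom X B T \<and> total X tB \<longrightarrow>
        cmp X f tB = cmp X (rst X f) tA)"

definition has_restriction_terminal :: "('o, 'm) rcat \<Rightarrow> bool" where
  "has_restriction_terminal X \<longleftrightarrow> (\<exists>T. restriction_terminal X T)"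

definition restriction_product ::
  "('o, 'm) rcat \<Rightarrow> 'o \<Rightarrow> 'o \<Rightarrow> 'o \<Rightarrow> 'm \<Rightarrow> 'm \<Rightarrow> bool" where
  "restriction_product X A B P pA pB \<longleftrightarrow> P \<in> Obj X \<and>
     pA \<in> hom X P A \<and> total X pA \<and> pB \<in> hom X P B \<and> total X pB \<and>
     (\<forall>C \<in> Obj X. \<forall>f \<in> hom X C A. \<forall>g \<in> hom X C B.
        \<exists>!h. h \<in> hom X C P \<and> cmp X h pA = cmp X (rst X g) f \<and> cmp X h pB = cmp X (rst X f) g)"

definition has_restriction_products :: "('o, 'm) rcat \<Rightarrow> bool" where
  "has_restriction_products X \<longleftrightarrow>
     (\<forall>A \<in> Obj X. \<forall>B \<in> Obj X. \<exists>P pA pB. restriction_product X A B P pA pB)"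

definition terminal :: "('o, 'm, 'x) cat_scheme \<Rightarrow> 'o \<Rightarrow> bool" where
  "terminal C T \<longleftrightarrow> T \<in> Obj C \<and> (\<forall>A \<in> Obj C. \<exists>!t. t \<in> hom C A T)"

definition product ::
  "('o, 'm, 'x) cat_scheme \<Rightarrow> 'o \<Rightarrow> 'o \<Rightarrow> 'o \<Rightarrow> 'm \<Rightarrow> 'm \<Rightarrow> bool" where
  "product C M N P p1 p2 \<longleftrightarrow> P \<in> Obj C \<and> p1 \<in> hom C P M \<and> p2 \<in> hom C P N \<and>
     (\<forall>Z \<in> Obj C. \<forall>f \<in> hom C Z M. \<forall>g \<in> hom C Z N.
        \<exists>!h. h \<in> hom C Z P \<and> cmp C h p1 = f \<and> cmp C h p2 = g)"

definition total_obj :: "('o, 'm, 'x) cat_scheme \<Rightarrow> ('o \<Rightarrow> 'o) \<Rightarrow> ('o \<Rightarrow> 'm) \<Rightarrow> 'o \<Rightarrow> bool" where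
  "total_obj C L eta M \<longleftrightarrow> L M = M \<and> eta M = idm C M"

definition local_terminal ::
  "('o, 'm, 'x) cat_scheme \<Rightarrow> ('o \<Rightarrow> 'o) \<Rightarrow> ('o \<Rightarrow> 'm) \<Rightarrow> 'o \<Rightarrow> bool" where
  "local_terminal C L eta T \<longleftrightarrow> total_obj C L eta T \<and> terminal C T"

text \<open>A local product of M and N: a product (P,p1,p2) such that L P, with some
  projections q1, q2, is a product of L M and L N, and eta P is the induced map
  eta M \<times> eta N, i.e. eta P ; q1 = p1 ; eta M and eta P ; q2 = p2 ; eta N.\<close>
definition local_product ::
  "('o, 'm, 'x) cat_scheme \<Rightarrow> ('o \<Rightarrow> 'o) \<Rightarrow> ('o \<Rightarrow> 'm) \<Rightarrow> 'o \<Rightarrow> 'o \<Rightarrow> 'o \<Rightarrow> 'm \<Rightarrow> 'm \<Rightarrow> bool" where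
  "local_product C L eta M N P p1 p2 \<longleftrightarrow> product C M N P p1 p2 \<and>
     (\<exists>q1 q2. product C (L M) (L N) (L P) q1 q2 \<and>
        cmp C (eta P) q1 = cmp C p1 (eta M) \<and> cmp C (eta P) q2 = cmp C p2 (eta N))"

definition has_local_terminal ::
  "('o, 'm, 'x) cat_scheme \<Rightarrow> ('o \<Rightarrow> 'o) \<Rightarrow> ('o \<Rightarrow> 'm) \<Rightarrow> bool" where
  "has_local_terminal C L eta \<longleftrightarrow> (\<exists>T. local_terminal C L eta T)"

definition has_local_products ::
  "('o, 'm, 'x) cat_scheme \<Rightarrow> ('o \<Rightarrow> 'o) \<Rightarrow> ('o \<Rightarrow> 'm) \<Rightarrow> bool" where
  "has_local_products C L eta \<longleftrightarrow>
     (\<forall>M \<in> Obj C. \<forall>N \<in> Obj C. \<exists>P p1 p2. local_product C L eta M N P p1 p2)"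

text \<open>Objects are pairs (A,a) with a a restriction idempotent on A. A morphism
  f : (A,a) \<rightarrow> (B,b) is represented as the triple ((A,a), f, (B,b)).\<close>

definition Lcat :: "('o, 'm) rcat \<Rightarrow> ('o \<times> 'm, ('o \<times> 'm) \<times> 'm \<times> ('o \<times> 'm)) cat" where
  "Lcat X = \<lparr>
     Obj = {(A, a). A \<in> Obj X \<and> a \<in> hom X A A \<and> rst X a = a},
     Arr = {((A, a), f, (B, b)). (A, a) \<in> {(A, a). A \<in> Obj X \<and> a \<in> hom X A A \<and> rst X a = a}
                \<and> (B, b) \<in> {(A, a). A \<in> Obj X \<and> a \<in> hom X A A \<and> rst X a = a}
                \<and> f \<in> hom X A B \<and> rst X f = a \<and> cmp X f b = f},
     dom = (\<lambda>(D, f, E). D),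
     cod = (\<lambda>(D, f, E). E),
     idm = (\<lambda>(A, a). ((A, a), a, (A, a))),
     cmp = (\<lambda>(D, f, E) (E', g, F). (D, cmp X f g, F)) \<rparr>"

definition Lobj :: "('o, 'm) rcat \<Rightarrow> 'o \<times> 'm \<Rightarrow> 'o \<times> 'm" where
  "Lobj X = (\<lambda>(A, a). (A, idm X A))"

definition Leta :: "('o, 'm) rcat \<Rightarrow> 'o \<times> 'm \<Rightarrow> ('o \<times> 'm) \<times> 'm \<times> ('o \<times> 'm)" where
  "Leta X = (\<lambda>(A, a). ((A, a), a, (A, idm X A)))"

end

theory Submission
  imports Defs
begin

locale rc =
  fixes X :: "('o, 'm) rcat"
  assumes RC: "restriction_category X"
begin

abbreviation cp (infixl "\<odot>" 70) where "f \<odot> g \<equiv> cmp X f g"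
abbreviation R where "R f \<equiv> rst X f"

lemma cat: "category X" using RC unfolding restriction_category_def by blast

lemma homI: "f \<in> Arr X \<Longrightarrow> dom X f = A \<Longrightarrow> cod X f = B \<Longrightarrow> f \<in> hom X A B"
  by (simp add: hom_def)

lemma homD: "f \<in> hom X A B \<Longrightarrow> f \<in> Arr X \<and> dom X f = A \<and> cod X f = B"
  by (simp add: hom_def)

lemma comp_hom: "f \<in> hom X A B \<Longrightarrow> g \<in> hom X B C \<Longrightarrow> f \<odot> g \<in> hom X A C"
  using cat unfolding category_def hom_def by auto

lemma assoc: "f \<in> hom X A B \<Longrightarrow> g \<in> hom X B C \<Longrightarrow> h \<in> hom X C D \<Longrightarrow> (f \<odot> g) \<odot> h = f \<odot> (g \<odot> h)"
  using cat unfolding category_def hom_def by auto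

lemma idm_hom: "A \<in> Obj X \<Longrightarrow> idm X A \<in> hom X A A"
  using cat unfolding category_def by auto

lemma obj_dom: "f \<in> hom X A B \<Longrightarrow> A \<in> Obj X"
  using cat unfolding category_def hom_def by auto

lemma obj_cod: "f \<in> hom X A B \<Longrightarrow> B \<in> Obj X"
  using cat unfolding category_def hom_def by auto

lemma id_l: "f \<in> hom X A B \<Longrightarrow> idm X A \<odot> f = f"
  using cat unfolding category_def hom_def by auto

lemma id_r: "f \<in> hom X A B \<Longrightarrow> f \<odot> idm X B = f"
  using cat unfolding category_def hom_def by auto

lemma rst_hom: "f \<in> hom X A B \<Longrightarrow> R f \<in> hom X A A"
  using RC unfolding restriction_category_def hom_def by auto

lemma rst_l: "f \<in> hom X A B \<Longrightarrow> R f \<odot> f = f"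
  using RC unfolding restriction_category_def hom_def by auto

lemma rst_comm: "f \<in> hom X A B \<Longrightarrow> g \<in> hom X A C \<Longrightarrow> R f \<odot> R g = R g \<odot> R f"
  using RC unfolding restriction_category_def hom_def by auto

lemma rst_rc: "f \<in> hom X A B \<Longrightarrow> g \<in> hom X A C \<Longrightarrow> R (R g \<odot> f) = R g \<odot> R f"
  using RC unfolding restriction_category_def hom_def by auto

lemma rst_nat: "f \<in> hom X A B \<Longrightarrow> g \<in> hom X B C \<Longrightarrow> f \<odot> R g = R (f \<odot> g) \<odot> f"
  using RC unfolding restriction_category_def hom_def by auto

lemma rst_id: "A \<in> Obj X \<Longrightarrow> R (idm X A) = idm X A"
  by (metis id_r idm_hom rst_hom rst_l)

lemma rst_idem: "f \<in> hom X A B \<Longrightarrow> R f \<odot> R f = R f"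
  by (metis rst_l rst_rc)

lemma rst_rst: "f \<in> hom X A B \<Longrightarrow> R (R f) = R f"
  by (metis id_r idm_hom obj_dom rst_hom rst_id rst_rc)

lemma total_iff: "f \<in> hom X A B \<Longrightarrow> total X f \<longleftrightarrow> R f = idm X A"
  by (simp add: total_def hom_def)

lemma rst_total_comp:
  assumes f: "f \<in> hom X A B" and g: "g \<in> hom X B C" and t: "R g = idm X B"
  shows "R (f \<odot> g) = R f"
proof -
  have fg: "f \<odot> g \<in> hom X A C" using f g by (rule comp_hom)
  have "f = R (f \<odot> g) \<odot> f" using rst_nat[OF f g] t id_r[OF f] by simp
  hence 1: "R f = R (f \<odot> g) \<odot> R f" using rst_rc[OF f fg] by metis
  have "R f \<odot> R (f \<odot> g) = R (R f \<odot> (f \<odot> g))" using rst_rc[OF fg f] by simp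
  also have "R f \<odot> (f \<odot> g) = f \<odot> g" using assoc[OF rst_hom[OF f] f g] rst_l[OF f] by simp
  finally have 2: "R f \<odot> R (f \<odot> g) = R (f \<odot> g)" .
  show ?thesis using 1 2 rst_comm[OF f fg] by simp
qed

lemma uvu:
  assumes x: "x \<in> hom X A B" and y: "y \<in> hom X A C"
  shows "(R x \<odot> R y) \<odot> R x = R x \<odot> R y" and "(R x \<odot> R y) \<odot> R y = R x \<odot> R y"
proof -
  note hx = rst_hom[OF x] and hy = rst_hom[OF y]
  show "(R x \<odot> R y) \<odot> R x = R x \<odot> R y"
    by (metis assoc hx hy rst_comm[OF x y] rst_idem[OF x])
  show "(R x \<odot> R y) \<odot> R y = R x \<odot> R y"
    by (metis assoc hx hy rst_idem[OF y])
qed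

lemma Lcat_simps:
  "Obj (Lcat X) = {(A, a). A \<in> Obj X \<and> a \<in> hom X A A \<and> rst X a = a}"
  "dom (Lcat X) (D, f, E) = D" "cod (Lcat X) (D, f, E) = E"
  "idm (Lcat X) (A, a) = ((A, a), a, (A, a))"
  "cmp (Lcat X) (D, f, E) (E', g, F) = (D, cmp X f g, F)"
  by (simp_all add: Lcat_def)

lemma Lobj_simp: "Lobj X (A, a) = (A, idm X A)" by (simp add: Lobj_def)
lemma Leta_simp: "Leta X (A, a) = ((A, a), a, (A, idm X A))" by (simp add: Leta_def)

lemma hom_Lcat:
  "t \<in> hom (Lcat X) (A, a) (B, b) \<longleftrightarrow> (\<exists>f. t = ((A, a), f, (B, b)) \<and>
     A \<in> Obj X \<and> a \<in> hom X A A \<and> rst X a = a \<and> B \<in> Obj X \<and> b \<in> hom X B B \<and> rst X b = b \<and>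
     f \<in> hom X A B \<and> rst X f = a \<and> cmp X f b = f)"
  by (auto simp: hom_def Lcat_def)

lemma hom_Lcat_I:
  "A \<in> Obj X \<Longrightarrow> a \<in> hom X A A \<Longrightarrow> rst X a = a \<Longrightarrow> B \<in> Obj X \<Longrightarrow> b \<in> hom X B B \<Longrightarrow> rst X b = b \<Longrightarrow>
     f \<in> hom X A B \<Longrightarrow> rst X f = a \<Longrightarrow> cmp X f b = f \<Longrightarrow> ((A, a), f, (B, b)) \<in> hom (Lcat X) (A, a) (B, b)"
  by (auto simp: hom_Lcat)

lemma ex1_eq: "\<exists>!u. P u \<Longrightarrow> P a \<Longrightarrow> P b \<Longrightarrow> a = b" by blast

lemma term1:
  assumes T: "restriction_terminal X T"
  shows "local_terminal (Lcat X) (Lobj X) (Leta X) (T, idm X T)"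
proof -
  have TO: "T \<in> Obj X" and ex: "\<forall>A\<in>Obj X. \<exists>!t. t \<in> hom X A T \<and> total X t"
    and nat: "\<forall>A \<in> Obj X. \<forall>B \<in> Obj X. \<forall>f \<in> hom X A B. \<forall>tA tB.
        tA \<in> hom X A T \<and> total X tA \<longrightarrow> tB \<in> hom X B T \<and> total X tB \<longrightarrow>
        f \<odot> tB = R f \<odot> tA"
    using T unfolding restriction_terminal_def by blast+
  have idT: "idm X T \<in> hom X T T" "R (idm X T) = idm X T" using TO idm_hom rst_id by auto
  have TL: "(T, idm X T) \<in> Obj (Lcat X)" using TO idT by (simp add: Lcat_simps)
  have "\<forall>Z \<in> Obj (Lcat X). \<exists>!t. t \<in> hom (Lcat X) Z (T, idm X T)"
  proof
    fix Z assume "Z \<in> Obj (Lcat X)"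
    then obtain A a where Z: "Z = (A, a)" and A: "A \<in> Obj X" "a \<in> hom X A A" "R a = a"
      by (auto simp: Lcat_simps)
    from ex A(1) obtain t0 where t0: "t0 \<in> hom X A T" "R t0 = idm X A" using total_iff by blast
    have w1: "a \<odot> t0 \<in> hom X A T" using comp_hom A(2) t0(1) by blast
    have w2: "R (a \<odot> t0) = a" using rst_rc[OF t0(1) A(2)] A t0 id_r by simp
    have w3: "(a \<odot> t0) \<odot> idm X T = a \<odot> t0" using id_r w1 by blast
    show "\<exists>!t. t \<in> hom (Lcat X) Z (T, idm X T)"
    proof
      show "((A, a), a \<odot> t0, (T, idm X T)) \<in> hom (Lcat X) Z (T, idm X T)"
        unfolding Z by (rule hom_Lcat_I) (use A TO idT w1 w2 w3 in auto)
      fix t assume "t \<in> hom (Lcat X) Z (T, idm X T)"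
      then obtain f where t: "t = ((A, a), f, (T, idm X T))" "f \<in> hom X A T" "R f = a"
        unfolding Z hom_Lcat by blast
      have "f \<odot> idm X T = R f \<odot> t0"
        using nat A(1) TO t(2) idT t0 total_iff by blast
      then show "t = ((A, a), a \<odot> t0, (T, idm X T))" using t id_r by simp
    qed
  qed
  then show ?thesis unfolding local_terminal_def total_obj_def terminal_def using TL
    by (simp add: Lobj_simp Leta_simp Lcat_simps)
qed

lemma term2:
  assumes LT: "local_terminal (Lcat X) (Lobj X) (Leta X) Tp"
  shows "has_restriction_terminal X"
proof -
  obtain T t where Tp: "Tp = (T, t)" by (cases Tp)
  from LT have "t = idm X T" using Lobj_simp unfolding local_terminal_def total_obj_def Tp by simp
  hence "terminal (Lcat X) (T, idm X T)" using LT unfolding Tp local_terminal_def by simp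
  hence TO: "T \<in> Obj X" and un: "\<forall>Z\<in>Obj (Lcat X). \<exists>!u. u \<in> hom (Lcat X) Z (T, idm X T)"
    by (auto simp: terminal_def Lcat_simps)
  have idT: "idm X T \<in> hom X T T" "R (idm X T) = idm X T" using TO idm_hom rst_id by auto
  have Lob: "\<And>A e. A \<in> Obj X \<Longrightarrow> e \<in> hom X A A \<Longrightarrow> R e = e \<Longrightarrow> (A, e) \<in> Obj (Lcat X)"
    by (simp add: Lcat_simps)
  have uniq: "f = g" if A: "A \<in> Obj X" "e \<in> hom X A A" "R e = e" and
     f: "f \<in> hom X A T" "R f = e" and g: "g \<in> hom X A T" "R g = e" for A e f g
  proof -
    have hf: "((A, e), f, (T, idm X T)) \<in> hom (Lcat X) (A, e) (T, idm X T)"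
      by (rule hom_Lcat_I) (use A f TO idT id_r in auto)
    have hg: "((A, e), g, (T, idm X T)) \<in> hom (Lcat X) (A, e) (T, idm X T)"
      by (rule hom_Lcat_I) (use A g TO idT id_r in auto)
    have "\<exists>!u. u \<in> hom (Lcat X) (A, e) (T, idm X T)" using un Lob[OF A] by blast
    from ex1_eq[OF this hf hg] show ?thesis by simp
  qed
  show ?thesis unfolding has_restriction_terminal_def restriction_terminal_def
  proof (intro exI conjI ballI allI impI)
    show "T \<in> Obj X" by (rule TO)
  next
    fix A assume A: "A \<in> Obj X"
    have idA: "idm X A \<in> hom X A A" "R (idm X A) = idm X A" using A idm_hom rst_id by auto
    have "(A, idm X A) \<in> Obj (Lcat X)" using Lob A idA by blast
    then obtain u where "u \<in> hom (Lcat X) (A, idm X A) (T, idm X T)" using un by blast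
    then obtain f where f: "f \<in> hom X A T" "R f = idm X A" by (auto simp: hom_Lcat)
    show "\<exists>!t. t \<in> hom X A T \<and> total X t"
    proof
      show "f \<in> hom X A T \<and> total X f" using f total_iff by blast
      fix g assume "g \<in> hom X A T \<and> total X g"
      then show "g = f" using uniq[OF A idA _ _ f] total_iff by blast
    qed
  next
    fix A B f tA tB assume A: "A \<in> Obj X" and B: "B \<in> Obj X" and f: "f \<in> hom X A B"
      and tA: "tA \<in> hom X A T \<and> total X tA" and tB: "tB \<in> hom X B T \<and> total X tB"
    have tA': "tA \<in> hom X A T" "R tA = idm X A" using tA total_iff by auto
    have tB': "tB \<in> hom X B T" "R tB = idm X B" using tB total_iff by auto
    have e: "R f \<in> hom X A A" "R (R f) = R f" using rst_hom[OF f] rst_rst[OF f] by auto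
    have 1: "f \<odot> tB \<in> hom X A T" "R (f \<odot> tB) = R f"
      using comp_hom[OF f tB'(1)] rst_total_comp[OF f tB'] by auto
    have 2: "R f \<odot> tA \<in> hom X A T" "R (R f \<odot> tA) = R f"
      using comp_hom[OF e(1) tA'(1)] rst_rc[OF tA'(1) f] tA'(2) id_r[OF e(1)] by auto
    show "f \<odot> tB = R f \<odot> tA" using uniq[OF A e 1 2] .
  qed
qed

lemma gp:
  assumes A: "A \<in> Obj X" "a \<in> hom X A A" "R a = a"
    and B: "B \<in> Obj X" "b \<in> hom X B B" "R b = b"
    and P: "restriction_product X A B P pA pB"
    and e_def: "e = R (pA \<odot> a) \<odot> R (pB \<odot> b)"
  shows "product (Lcat X) (A, a) (B, b) (P, e) ((P, e), e \<odot> pA, (A, a)) ((P, e), e \<odot> pB, (B, b))"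
    and "e \<odot> pA \<odot> a = e \<odot> pA" and "e \<odot> pB \<odot> b = e \<odot> pB"
    and "(P, e) \<in> Obj (Lcat X)"
proof -
  have PO: "P \<in> Obj X" and pA: "pA \<in> hom X P A" "R pA = idm X P"
    and pB: "pB \<in> hom X P B" "R pB = idm X P"
    and univ: "\<forall>C \<in> Obj X. \<forall>f \<in> hom X C A. \<forall>g \<in> hom X C B.
        \<exists>!h. h \<in> hom X C P \<and> h \<odot> pA = R g \<odot> f \<and> h \<odot> pB = R f \<odot> g"
    using P total_iff unfolding restriction_product_def by blast+
  have pAa: "pA \<odot> a \<in> hom X P A" using comp_hom pA(1) A(2) by blast
  have pBb: "pB \<odot> b \<in> hom X P B" using comp_hom pB(1) B(2) by blast
  define k where "k = R (pA \<odot> a) \<odot> (pB \<odot> b)"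
  have kh: "k \<in> hom X P B" unfolding k_def using comp_hom rst_hom[OF pAa] pBb by blast
  have ek: "e = R k" unfolding k_def e_def using rst_rc[OF pBb pAa] by simp
  have eh: "e \<in> hom X P P" using ek rst_hom[OF kh] by simp
  have Re: "R e = e" using ek rst_rst[OF kh] by simp
  have hRa: "R (pA \<odot> a) \<in> hom X P P" using rst_hom[OF pAa] .
  have hRb: "R (pB \<odot> b) \<in> hom X P P" using rst_hom[OF pBb] .
  have e1: "e \<odot> pA \<in> hom X P A" using comp_hom eh pA(1) by blast
  have e1r: "R (e \<odot> pA) = e" using rst_rc[OF pA(1) kh] ek pA(2) id_r[OF eh] by simp
  have e2: "e \<odot> pB \<in> hom X P B" using comp_hom eh pB(1) by blast
  have e2r: "R (e \<odot> pB) = e" using rst_rc[OF pB(1) kh] ek pB(2) id_r[OF eh] by simp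
  have e1a: "e \<odot> pA \<odot> a = e \<odot> pA"
  proof -
    have "e \<odot> pA \<odot> a = e \<odot> (pA \<odot> R a)" using assoc[OF eh pA(1) A(2)] A(3) by simp
    also have "\<dots> = e \<odot> (R (pA \<odot> a) \<odot> pA)" using rst_nat[OF pA(1) A(2)] by simp
    also have "\<dots> = (e \<odot> R (pA \<odot> a)) \<odot> pA" using assoc[OF eh hRa pA(1)] by simp
    also have "e \<odot> R (pA \<odot> a) = e" unfolding e_def using uvu(1)[OF pAa pBb] .
    finally show ?thesis .
  qed
  have e2b: "e \<odot> pB \<odot> b = e \<odot> pB"
  proof -
    have "e \<odot> pB \<odot> b = e \<odot> (pB \<odot> R b)" using assoc[OF eh pB(1) B(2)] B(3) by simp
    also have "\<dots> = e \<odot> (R (pB \<odot> b) \<odot> pB)" using rst_nat[OF pB(1) B(2)] by simp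
    also have "\<dots> = (e \<odot> R (pB \<odot> b)) \<odot> pB" using assoc[OF eh hRb pB(1)] by simp
    also have "e \<odot> R (pB \<odot> b) = e" unfolding e_def using uvu(2)[OF pAa pBb] .
    finally show ?thesis .
  qed
  show "e \<odot> pA \<odot> a = e \<odot> pA" "e \<odot> pB \<odot> b = e \<odot> pB" by (fact e1a, fact e2b)
  have PL: "(P, e) \<in> Obj (Lcat X)" using PO eh Re by (simp add: Lcat_simps)
  show "(P, e) \<in> Obj (Lcat X)" by (fact PL)
  have p1: "((P, e), e \<odot> pA, (A, a)) \<in> hom (Lcat X) (P, e) (A, a)"
    by (rule hom_Lcat_I) (use PO eh Re A e1 e1r e1a in auto)
  have p2: "((P, e), e \<odot> pB, (B, b)) \<in> hom (Lcat X) (P, e) (B, b)"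
    by (rule hom_Lcat_I) (use PO eh Re B e2 e2r e2b in auto)
  show "product (Lcat X) (A, a) (B, b) (P, e) ((P, e), e \<odot> pA, (A, a)) ((P, e), e \<odot> pB, (B, b))"
    unfolding product_def
  proof (intro conjI ballI PL p1 p2)
    fix Z f g assume Z: "Z \<in> Obj (Lcat X)" and f: "f \<in> hom (Lcat X) Z (A, a)"
      and g: "g \<in> hom (Lcat X) Z (B, b)"
    obtain C c where Zc: "Z = (C, c)" by (cases Z)
    obtain f0 where f0: "f = ((C, c), f0, (A, a))" "C \<in> Obj X" "c \<in> hom X C C" "R c = c"
      "f0 \<in> hom X C A" "R f0 = c" "f0 \<odot> a = f0" using f unfolding Zc hom_Lcat by blast
    obtain g0 where g0: "g = ((C, c), g0, (B, b))"
      "g0 \<in> hom X C B" "R g0 = c" "g0 \<odot> b = g0" using g unfolding Zc hom_Lcat by blast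
    have "\<exists>!h. h \<in> hom X C P \<and> h \<odot> pA = R g0 \<odot> f0 \<and> h \<odot> pB = R f0 \<odot> g0"
      using univ f0(2,5) g0(2) by blast
    moreover have "R g0 \<odot> f0 = f0" using rst_l[OF f0(5)] f0(6) g0(3) by simp
    moreover have "R f0 \<odot> g0 = g0" using rst_l[OF g0(2)] f0(6) g0(3) by simp
    ultimately have ex: "\<exists>!h. h \<in> hom X C P \<and> h \<odot> pA = f0 \<and> h \<odot> pB = g0" by simp
    then obtain h0 where h0: "h0 \<in> hom X C P" "h0 \<odot> pA = f0" "h0 \<odot> pB = g0" by blast
    have Rh0: "R h0 = c" using rst_total_comp[OF h0(1) pA] h0(2) f0(6) by simp
    have hk: "h0 \<odot> k = g0"
    proof -
      have "h0 \<odot> k = (h0 \<odot> R (pA \<odot> a)) \<odot> (pB \<odot> b)"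
        unfolding k_def using assoc[OF h0(1) hRa pBb] by simp
      also have "h0 \<odot> R (pA \<odot> a) = R (h0 \<odot> (pA \<odot> a)) \<odot> h0" using rst_nat[OF h0(1) pAa] .
      also have "h0 \<odot> (pA \<odot> a) = f0" using assoc[OF h0(1) pA(1) A(2)] h0(2) f0(7) by simp
      also have "R f0 \<odot> h0 = h0" using rst_l[OF h0(1)] Rh0 f0(6) by simp
      also have "h0 \<odot> (pB \<odot> b) = g0" using assoc[OF h0(1) pB(1) B(2)] h0(3) g0(4) by simp
      finally show ?thesis .
    qed
    have h0e: "h0 \<odot> e = h0"
      using rst_nat[OF h0(1) kh] ek hk g0(3) rst_l[OF h0(1)] Rh0 by simp
    show "\<exists>!h. h \<in> hom (Lcat X) Z (P, e) \<and> cmp (Lcat X) h ((P, e), e \<odot> pA, (A, a)) = f \<and>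
            cmp (Lcat X) h ((P, e), e \<odot> pB, (B, b)) = g"
    proof
      have c1: "h0 \<odot> (e \<odot> pA) = f0" using assoc[OF h0(1) eh pA(1)] h0e h0(2) by simp
      have c2: "h0 \<odot> (e \<odot> pB) = g0" using assoc[OF h0(1) eh pB(1)] h0e h0(3) by simp
      have hh: "((C, c), h0, (P, e)) \<in> hom (Lcat X) Z (P, e)"
        unfolding Zc by (rule hom_Lcat_I) (use f0 PO eh Re h0 Rh0 h0e in auto)
      show "((C, c), h0, (P, e)) \<in> hom (Lcat X) Z (P, e) \<and>
        cmp (Lcat X) ((C, c), h0, (P, e)) ((P, e), e \<odot> pA, (A, a)) = f \<and>
        cmp (Lcat X) ((C, c), h0, (P, e)) ((P, e), e \<odot> pB, (B, b)) = g"
        using hh c1 c2 f0(1) g0(1) by (simp add: Lcat_simps)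
      fix h assume h: "h \<in> hom (Lcat X) Z (P, e) \<and> cmp (Lcat X) h ((P, e), e \<odot> pA, (A, a)) = f \<and>
            cmp (Lcat X) h ((P, e), e \<odot> pB, (B, b)) = g"
      then obtain h1 where h1: "h = ((C, c), h1, (P, e))" "h1 \<in> hom X C P" "h1 \<odot> e = h1"
        unfolding Zc hom_Lcat by blast
      have "h1 \<odot> (e \<odot> pA) = f0" "h1 \<odot> (e \<odot> pB) = g0"
        using h h1(1) f0(1) g0(1) by (simp_all add: Lcat_simps)
      hence "h1 \<odot> pA = f0" "h1 \<odot> pB = g0"
        using assoc[OF h1(2) eh pA(1)] assoc[OF h1(2) eh pB(1)] h1(3) by simp_all
      hence "h1 = h0" using ex h0 h1(2) by blast
      then show "h = ((C, c), h0, (P, e))" using h1(1) by simp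
    qed
  qed
qed

lemma prod1:
  assumes H: "has_restriction_products X"
  shows "has_local_products (Lcat X) (Lobj X) (Leta X)"
  unfolding has_local_products_def
proof (intro ballI)
  fix M N assume M: "M \<in> Obj (Lcat X)" and N: "N \<in> Obj (Lcat X)"
  obtain A a where Ma: "M = (A, a)" and A: "A \<in> Obj X" "a \<in> hom X A A" "R a = a"
    using M by (auto simp: Lcat_simps)
  obtain B b where Nb: "N = (B, b)" and B: "B \<in> Obj X" "b \<in> hom X B B" "R b = b"
    using N by (auto simp: Lcat_simps)
  obtain P pA pB where rp: "restriction_product X A B P pA pB"
    using H A(1) B(1) unfolding has_restriction_products_def by blast
  have PO: "P \<in> Obj X" and pA: "pA \<in> hom X P A" "R pA = idm X P"
    and pB: "pB \<in> hom X P B" "R pB = idm X P"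
    using rp total_iff unfolding restriction_product_def by blast+
  define e where "e = R (pA \<odot> a) \<odot> R (pB \<odot> b)"
  note G = gp[OF A B rp e_def]
  have idA: "idm X A \<in> hom X A A" "R (idm X A) = idm X A" using A idm_hom rst_id by auto
  have idB: "idm X B \<in> hom X B B" "R (idm X B) = idm X B" using B idm_hom rst_id by auto
  define e0 where "e0 = R (pA \<odot> idm X A) \<odot> R (pB \<odot> idm X B)"
  note G0 = gp[OF A(1) idA B(1) idB rp e0_def]
  have e0: "e0 = idm X P" unfolding e0_def using id_r[OF pA(1)] id_r[OF pB(1)] pA(2) pB(2)
    id_l[OF idm_hom[OF PO]] by simp
  have e0A: "e0 \<odot> pA = pA" "e0 \<odot> pB = pB" using e0 id_l pA(1) pB(1) by auto
  have prodL: "product (Lcat X) (A, idm X A) (B, idm X B) (P, idm X P)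
      ((P, idm X P), pA, (A, idm X A)) ((P, idm X P), pB, (B, idm X B))"
    using G0(1) e0 e0A by simp
  show "\<exists>Q p1 p2. local_product (Lcat X) (Lobj X) (Leta X) M N Q p1 p2"
  proof (intro exI)
    show "local_product (Lcat X) (Lobj X) (Leta X) M N (P, e) ((P, e), e \<odot> pA, (A, a)) ((P, e), e \<odot> pB, (B, b))"
      unfolding local_product_def Ma Nb
    proof (intro conjI G(1) exI)
      show "product (Lcat X) (Lobj X (A, a)) (Lobj X (B, b)) (Lobj X (P, e))
        ((P, idm X P), pA, (A, idm X A)) ((P, idm X P), pB, (B, idm X B))"
        using prodL by (simp add: Lobj_simp)
      show "cmp (Lcat X) (Leta X (P, e)) ((P, idm X P), pA, (A, idm X A)) =
            cmp (Lcat X) ((P, e), e \<odot> pA, (A, a)) (Leta X (A, a))"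
        using G(2) by (simp add: Leta_simp Lcat_simps)
      show "cmp (Lcat X) (Leta X (P, e)) ((P, idm X P), pB, (B, idm X B)) =
            cmp (Lcat X) ((P, e), e \<odot> pB, (B, b)) (Leta X (B, b))"
        using G(3) by (simp add: Leta_simp Lcat_simps)
    qed
  qed
qed

lemma prod2:
  assumes H: "has_local_products (Lcat X) (Lobj X) (Leta X)"
  shows "has_restriction_products X"
  unfolding has_restriction_products_def
proof (intro ballI)
  fix A B assume A: "A \<in> Obj X" and B: "B \<in> Obj X"
  have idA: "idm X A \<in> hom X A A" "R (idm X A) = idm X A" using A idm_hom rst_id by auto
  have idB: "idm X B \<in> hom X B B" "R (idm X B) = idm X B" using B idm_hom rst_id by auto
  have MA: "(A, idm X A) \<in> Obj (Lcat X)" using A idA by (simp add: Lcat_simps)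
  have NB: "(B, idm X B) \<in> Obj (Lcat X)" using B idB by (simp add: Lcat_simps)
  obtain P p1 p2 where "local_product (Lcat X) (Lobj X) (Leta X) (A, idm X A) (B, idm X B) P p1 p2"
    using H MA NB unfolding has_local_products_def by blast
  then obtain q1 q2 where pr: "product (Lcat X) (A, idm X A) (B, idm X B) (Lobj X P) q1 q2"
    unfolding local_product_def by (auto simp: Lobj_simp)
  obtain Po e where Pe: "P = (Po, e)" by (cases P)
  have pr': "product (Lcat X) (A, idm X A) (B, idm X B) (Po, idm X Po) q1 q2"
    using pr Pe by (simp add: Lobj_simp)
  have PO: "Po \<in> Obj X" using pr' unfolding product_def by (simp add: Lcat_simps)
  obtain pi1 where q1: "q1 = ((Po, idm X Po), pi1, (A, idm X A))" "pi1 \<in> hom X Po A" "R pi1 = idm X Po"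
    using pr' unfolding product_def hom_Lcat by blast
  obtain pi2 where q2: "q2 = ((Po, idm X Po), pi2, (B, idm X B))" "pi2 \<in> hom X Po B" "R pi2 = idm X Po"
    using pr' unfolding product_def hom_Lcat by blast
  have univL: "\<forall>Z \<in> Obj (Lcat X). \<forall>f \<in> hom (Lcat X) Z (A, idm X A). \<forall>g \<in> hom (Lcat X) Z (B, idm X B).
        \<exists>!h. h \<in> hom (Lcat X) Z (Po, idm X Po) \<and> cmp (Lcat X) h q1 = f \<and> cmp (Lcat X) h q2 = g"
    using pr' unfolding product_def by blast
  have idP: "idm X Po \<in> hom X Po Po" "R (idm X Po) = idm X Po" using PO idm_hom rst_id by auto
  show "\<exists>P pA pB. restriction_product X A B P pA pB"
  proof (intro exI)
    show "restriction_product X A B Po pi1 pi2"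
      unfolding restriction_product_def
    proof (intro conjI ballI PO q1(2) q2(2))
      show "total X pi1" using q1 total_iff by blast
      show "total X pi2" using q2 total_iff by blast
      fix C f g assume C: "C \<in> Obj X" and f: "f \<in> hom X C A" and g: "g \<in> hom X C B"
      define c where "c = R g \<odot> R f"
      have cR: "c = R (R g \<odot> f)" unfolding c_def using rst_rc[OF f g] by simp
      have f': "R g \<odot> f \<in> hom X C A" using comp_hom rst_hom[OF g] f by blast
      have ch: "c \<in> hom X C C" using cR rst_hom[OF f'] by simp
      have Rc: "R c = c" using cR rst_rst[OF f'] by simp
      have g': "R f \<odot> g \<in> hom X C B" using comp_hom rst_hom[OF f] g by blast
      have Rg': "R (R f \<odot> g) = c" unfolding c_def using rst_rc[OF g f] rst_comm[OF f g] by simp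
      have ZL: "(C, c) \<in> Obj (Lcat X)" using C ch Rc by (simp add: Lcat_simps)
      have FL: "((C, c), R g \<odot> f, (A, idm X A)) \<in> hom (Lcat X) (C, c) (A, idm X A)"
        by (rule hom_Lcat_I) (use C ch Rc A idA f' cR id_r in auto)
      have GL: "((C, c), R f \<odot> g, (B, idm X B)) \<in> hom (Lcat X) (C, c) (B, idm X B)"
        by (rule hom_Lcat_I) (use C ch Rc B idB g' Rg' id_r in auto)
      have ex: "\<exists>!h. h \<in> hom (Lcat X) (C, c) (Po, idm X Po) \<and>
          cmp (Lcat X) h q1 = ((C, c), R g \<odot> f, (A, idm X A)) \<and>
          cmp (Lcat X) h q2 = ((C, c), R f \<odot> g, (B, idm X B))"
        using univL ZL FL GL by blast
      then obtain hL where hL: "hL \<in> hom (Lcat X) (C, c) (Po, idm X Po)"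
          "cmp (Lcat X) hL q1 = ((C, c), R g \<odot> f, (A, idm X A))"
          "cmp (Lcat X) hL q2 = ((C, c), R f \<odot> g, (B, idm X B))" by blast
      then obtain h0 where h0: "hL = ((C, c), h0, (Po, idm X Po))" "h0 \<in> hom X C Po"
        unfolding hom_Lcat by blast
      have h0c: "h0 \<odot> pi1 = R g \<odot> f" "h0 \<odot> pi2 = R f \<odot> g"
        using hL(2,3) h0(1) q1(1) q2(1) by (simp_all add: Lcat_simps)
      show "\<exists>!h. h \<in> hom X C Po \<and> h \<odot> pi1 = R g \<odot> f \<and> h \<odot> pi2 = R f \<odot> g"
      proof
        show "h0 \<in> hom X C Po \<and> h0 \<odot> pi1 = R g \<odot> f \<and> h0 \<odot> pi2 = R f \<odot> g" using h0 h0c by blast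
        fix h1 assume h1: "h1 \<in> hom X C Po \<and> h1 \<odot> pi1 = R g \<odot> f \<and> h1 \<odot> pi2 = R f \<odot> g"
        have Rh1: "R h1 = c" using rst_total_comp[of h1 C Po pi1 A] h1 q1 cR by simp
        have h1L: "((C, c), h1, (Po, idm X Po)) \<in> hom (Lcat X) (C, c) (Po, idm X Po)"
          by (rule hom_Lcat_I) (use C ch Rc PO idP h1 Rh1 id_r in auto)
        have "((C, c), h1, (Po, idm X Po)) = hL"
          by (rule ex1_eq[OF ex]) (use h1L h1 hL q1(1) q2(1) in \<open>auto simp: Lcat_simps\<close>)
        then show "h1 = h0" using h0(1) by simp
      qed
    qed
  qed
qed

end

theorem proposition6p8:
  fixes X :: "('o, 'm) rcat"
  assumes "restriction_category X"
  shows "(has_restriction_terminal X \<longleftrightarrow> has_local_terminal (Lcat X) (Lobj X) (Leta X)) \<and>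
         (has_restriction_products X \<longleftrightarrow> has_local_products (Lcat X) (Lobj X) (Leta X))"
proof -
  interpret rc X by (rule rc.intro) (rule assms)
  show ?thesis
  proof (intro conjI iffI)
    assume "has_restriction_terminal X"
    then obtain T where "restriction_terminal X T" unfolding has_restriction_terminal_def by blast
    then show "has_local_terminal (Lcat X) (Lobj X) (Leta X)"
      unfolding has_local_terminal_def using term1 by blast
  next
    assume "has_local_terminal (Lcat X) (Lobj X) (Leta X)"
    then show "has_restriction_terminal X" unfolding has_local_terminal_def using term2 by blast
  next
    assume "has_restriction_products X"
    then show "has_local_products (Lcat X) (Lobj X) (Leta X)" by (rule prod1)
  next
    assume "has_local_products (Lcat X) (Lobj X) (Leta X)"
    then show "has_restriction_products X" by (rule prod2)
  qed
qed

end
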